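(* Let $p\in(1,\infty)$, $r,h>0$ and $\phi\in L^\infty(\Omega_r)$. (a) There exists a unique $\psi\in L^\infty(\Omega)$ such that $-L[\psi,\phi](x)=f(x)$ for all $x\in\Omega$. (b) If $\psi_1,\psi_2:\Omega\to\mathbb{R}$ satisfy $-L[\psi_1,\phi](x)\le f(x)$ and $-L[\psi_2,\phi](x)\ge f(x)$ for all $x\in\Omega$, then $\psi_1\le\psi_2$ in $\Omega$.
   Context: $\Omega\subset\mathbb{R}^d$ is a bounded open set, $f\in C(\overline\Omega)$, $\partial\Omega_r:=\{x\in\mathbb{R}^d\setminus\Omega:\operatorname{dist}(x,\Omega)\le r\}$, $\Omega_r=\Omega\cup\partial\Omega_r$. $J_p(t)=|t|^{p-2}t$ ($J_p(0)=0$); $B_r$ open ball of radius $r$ at $0$; $\omega_d=|B_1|$; $D_{d,p}=\frac{d}{2(d+p)}\fint_{\partial B_1}|y_1|^p\,d\sigma(y)$; $\mathcal G_h=h\mathbb Z^d=\{y_\alpha=h\alpha\}$. For $\psi:\Omega\to\mathbb{R}$ and $\phi:\Omega_r\to\mathbb{R}$, \[ L[\psi,\phi](x):=\frac{h^d}{D_{d,p}\,\omega_d\,r^{p+d}}\sum_{y_\alpha\in\mathcal G_h\cap B_r}J_p\big(\phi(x+y_\alpha)-\psi(x)\big),\qquad x\in\Omega. \] *)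

theory Defs
  imports "HOL-Analysis.Analysis"
begin

definition Jp :: "real \<Rightarrow> real \<Rightarrow> real" where
  "Jp p t = (if t = 0 then 0 else \<bar>t\<bar> powr (p - 2) * t)"

definition grid :: "real \<Rightarrow> (real^'n) set" where
  "grid h = {y. \<forall>i. \<exists>k::int. y $ i = h * of_int k}"

definition outer_layer :: "(real^'n) set \<Rightarrow> real \<Rightarrow> (real^'n) set" where
  "outer_layer \<Omega> r = {x. x \<notin> \<Omega> \<and> infdist x \<Omega> \<le> r}"

definition ext_dom :: "(real^'n) set \<Rightarrow> real \<Rightarrow> (real^'n) set" where
  "ext_dom \<Omega> r = \<Omega> \<union> outer_layer \<Omega> r"

definition omega :: "('n::finite) itself \<Rightarrow> real" where
  "omega _ = measure lborel (ball (0::real^'n) 1)"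

text \<open>Average over the unit sphere w.r.t. normalized surface measure, realised
  via the cone measure: fint_{dB_1} g d sigma = (1/omega_d) int_{B_1} g(y/|y|) dy.\<close>
definition sphere_avg :: "(real^'n \<Rightarrow> real) \<Rightarrow> real" where
  "sphere_avg g = (LINT y : ball 0 1 | lborel. g (y /\<^sub>R norm y)) / omega TYPE('n)"

text \<open>D_{d,p}; y_1 is a fixed coordinate (any coordinate gives the same value by symmetry).\<close>
definition Dconst :: "('n::finite) itself \<Rightarrow> real \<Rightarrow> real" where
  "Dconst _ p = real CARD('n) / (2 * (real CARD('n) + p)) *
      sphere_avg (\<lambda>y::real^'n. \<bar>y $ (SOME i. True)\<bar> powr p)"

definition Lop :: "real \<Rightarrow> real \<Rightarrow> real \<Rightarrow> (real^'n \<Rightarrow> real) \<Rightarrow> (real^'n \<Rightarrow> real) \<Rightarrow> real^'n \<Rightarrow> real" where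
  "Lop p r h \<psi> \<phi> x =
     h ^ CARD('n) / (Dconst TYPE('n) p * omega TYPE('n) * r powr (p + real CARD('n))) *
     (\<Sum>y \<in> grid h \<inter> ball 0 r. Jp p (\<phi> (x + y) - \<psi> x))"

end

theory Submission
  imports Defs
begin

lemma Jp_alt: "Jp p t = (max t 0) powr (p-1) - (max (-t) 0) powr (p-1)"
proof -
  have "t > 0 \<Longrightarrow> t powr (p-2) * t = t powr (p-1)"
    using powr_mult_base[of t "p-2"] by (simp add: mult.commute)
  moreover have "t < 0 \<Longrightarrow> (-t) powr (p-2) * t = - ((-t) powr (p-1))"
  proof -
    assume "t<0"
    then have "(-t) powr (p-2) * (-t) = (-t) powr (p-1)"
      using powr_mult_base[of "-t" "p-2"] by (simp add: mult.commute)
    then show ?thesis by (smt (verit) mult_minus_right)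
  qed
  ultimately show ?thesis unfolding Jp_def by (auto simp: max_def abs_if)
qed

lemma Jp_cont: "1 < p \<Longrightarrow> continuous_on UNIV (Jp p)"
proof -
  assume p: "1 < p"
  have a: "continuous_on UNIV (\<lambda>t::real. max t 0 powr (p-1))"
    by (rule continuous_on_powr') (use p in \<open>auto intro!: continuous_on_max continuous_on_const continuous_on_id\<close>)
  have b: "continuous_on UNIV (\<lambda>t::real. max (-t) 0 powr (p-1))"
    by (rule continuous_on_powr') (use p in \<open>auto intro!: continuous_on_max continuous_on_const continuous_on_minus continuous_on_id\<close>)
  show ?thesis unfolding Jp_alt[abs_def] by (rule continuous_on_diff[OF a b])
qed

lemma Jp_strict: assumes "1 < p" "s < t" shows "Jp p s < Jp p t"
proof -
  have m1: "max s 0 powr (p-1) \<le> max t 0 powr (p-1)"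
    using assms by (intro powr_mono2) auto
  have m2: "max (-t) 0 powr (p-1) \<le> max (-s) 0 powr (p-1)"
    using assms by (intro powr_mono2) auto
  show ?thesis
  proof (cases "t > 0")
    case True
    have "max s 0 powr (p-1) < max t 0 powr (p-1) \<or> s < 0"
      using assms True by (cases "s \<ge> 0") (auto intro!: powr_less_mono2)
    moreover have "s < 0 \<Longrightarrow> max (-t) 0 powr (p-1) < max (-s) 0 powr (p-1)"
      using assms True by (auto intro!: powr_less_mono2)
    ultimately show ?thesis unfolding Jp_alt using m1 m2 by linarith
  next
    case False
    have "max (-t) 0 powr (p-1) < max (-s) 0 powr (p-1)"
      using assms False by (intro powr_less_mono2) auto
    then show ?thesis unfolding Jp_alt using m1 by linarith
  qed
qed

lemma Jp_mono: "1 < p \<Longrightarrow> s \<le> t \<Longrightarrow> Jp p s \<le> Jp p t"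
  using Jp_strict[of p s t] by (cases "s = t") auto

lemma Jp_pos: "1 < p \<Longrightarrow> 0 \<le> t \<Longrightarrow> Jp p t = t powr (p-1)"
  unfolding Jp_alt by auto

lemma Jp_neg: "1 < p \<Longrightarrow> t \<le> 0 \<Longrightarrow> Jp p t = - ((-t) powr (p-1))"
  unfolding Jp_alt by (cases "t = 0") auto


lemma finite_grid_ball:
  fixes h r :: real assumes "0 < h"
  shows "finite (grid h \<inter> ball (0::real^'n) r)"
proof -
  define N where "N = ceiling (r / h)"
  define S where "S = (\<lambda>k::int. h * of_int k) ` {-N..N}"
  have fS: "finite S" unfolding S_def by simp
  have sub: "grid h \<inter> ball (0::real^'n) r \<subseteq> vec_lambda ` (PiE UNIV (\<lambda>_. S))"
  proof
    fix y :: "real^'n" assume y: "y \<in> grid h \<inter> ball 0 r"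
    have "\<forall>i. y $ i \<in> S"
    proof
      fix i
      obtain k :: int where k: "y $ i = h * of_int k" using y unfolding grid_def by auto
      have "\<bar>y $ i\<bar> < r" using y component_le_norm_cart[of y i] by auto
      then have "\<bar>h * of_int k\<bar> < r" using k by simp
      then have "h * \<bar>of_int k\<bar> < r" using assms by (simp add: abs_mult)
      then have "\<bar>of_int k\<bar> < r / h" using assms by (simp add: field_simps)
      then have "\<bar>of_int k\<bar> \<le> real_of_int N" unfolding N_def
        by (meson le_of_int_ceiling less_le_trans order_less_imp_le)
      then have "\<bar>k\<bar> \<le> N" by linarith
      then show "y $ i \<in> S" unfolding S_def k by (intro image_eqI[of _ _ k]) auto
    qed
    then have "(\<lambda>i. y $ i) \<in> PiE UNIV (\<lambda>_. S)" by auto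
    moreover have "y = vec_lambda (\<lambda>i. y $ i)" by simp
    ultimately show "y \<in> vec_lambda ` (PiE UNIV (\<lambda>_. S))" by blast
  qed
  show ?thesis by (rule finite_subset[OF sub]) (simp add: fS finite_PiE)
qed

lemma zero_grid_ball: "0 < r \<Longrightarrow> (0::real^'n) \<in> grid h \<inter> ball 0 r"
  unfolding grid_def by (auto intro: exI[of _ 0])

lemma omega_pos: "omega TYPE('n::finite) > 0"
  unfolding omega_def using content_ball_pos[of 1 "0::real^'n"] by simp

lemma sphere_int_pos:
  fixes p :: real assumes p: "0 < p"
  defines "F \<equiv> (\<lambda>y::real^'n. \<bar>(y /\<^sub>R norm y) $ (SOME i. True)\<bar> powr p)"
  shows "(LINT y : ball 0 1 | lborel. F y) > 0"
proof -
  define i0 :: 'n where "i0 = (SOME i. True)"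
  define G where "G = (\<lambda>y. indicator (ball (0::real^'n) 1) y *\<^sub>R F y)"
  have Fm: "F \<in> borel_measurable lborel" unfolding F_def by measurable
  have Gm: "G \<in> borel_measurable lborel" unfolding G_def
    by (intro borel_measurable_scaleR borel_measurable_indicator Fm) auto
  have Fb: "\<bar>F y\<bar> \<le> 1" for y
  proof -
    have "\<bar>(y /\<^sub>R norm y) $ i0\<bar> \<le> 1"
      using component_le_norm_cart[of "y /\<^sub>R norm y" i0]
      by (cases "y = 0") auto
    then have "\<bar>(y /\<^sub>R norm y) $ i0\<bar> powr p \<le> 1 powr p"
      using p by (intro powr_mono2) auto
    then show ?thesis unfolding F_def i0_def by simp
  qed
  have Gi: "integrable lborel G"
    by (rule integrableI_bounded_set[where A="ball 0 1" and B=1])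
       (use Gm Fb in \<open>auto simp: G_def emeasure_lborel_ball_finite[unfolded infinity_ennreal_def]\<close>)
  have Gn: "AE y in lborel. 0 \<le> G y" unfolding G_def F_def by (auto simp: indicator_def)
  define a :: "real^'n" where "a = axis i0 (1/2)"
  have Gpos: "G y > 0" if y: "y \<in> ball a (1/4)" for y
  proof -
    have "\<bar>(y - a) $ i0\<bar> < 1/4" using y component_le_norm_cart[of "y - a" i0]
      by (simp add: dist_norm norm_minus_commute)
    then have "\<bar>y $ i0 - 1/2\<bar> < 1/4" unfolding a_def by (simp add: axis_def)
    then have yi: "y $ i0 > 1/4" by linarith
    have "a = (1/2) *\<^sub>R axis i0 1" unfolding a_def by (simp add: axis_def vec_eq_iff)
    then have "norm a = 1/2" by simp
    then have "norm y < 1" using y norm_triangle_ineq[of a "y - a"]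
      by (simp add: dist_norm norm_minus_commute)
    moreover have "y \<noteq> 0" using yi by auto
    ultimately show ?thesis unfolding G_def F_def i0_def[symmetric] using yi by simp
  qed
  have "integral\<^sup>L lborel G \<noteq> 0"
  proof
    assume "integral\<^sup>L lborel G = 0"
    then have "AE y in lborel. G y = 0" using integral_nonneg_eq_0_iff_AE[OF Gi Gn] by simp
    then have "AE y in lborel. y \<notin> ball a (1/4)"
      by eventually_elim (use Gpos in force)
    then have "ball a (1/4) \<in> null_sets lborel" by (subst AE_iff_null_sets) auto
    then have "measure lborel (ball a (1/4)) = 0" by (simp add: measure_eq_0_null_sets)
    then show False using content_ball_pos[of "1/4" a] by simp
  qed
  moreover have "integral\<^sup>L lborel G \<ge> 0" using Gn by (simp add: integral_nonneg_AE)
  ultimately show ?thesis unfolding set_lebesgue_integral_def G_def by simp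
qed

lemma Dconst_pos: "1 < p \<Longrightarrow> Dconst TYPE('n::finite) p > 0"
  unfolding Dconst_def sphere_avg_def
  using sphere_int_pos[of p, where 'n='n] omega_pos[where 'n='n]
  by (intro mult_pos_pos divide_pos_pos) auto

lemma ext_dom_eq: "0 < r \<Longrightarrow> ext_dom \<Omega> r = {x. infdist x \<Omega> \<le> r}"
  unfolding ext_dom_def outer_layer_def by auto

lemma ext_dom_sets: "0 < r \<Longrightarrow> ext_dom \<Omega> r \<in> sets lebesgue"
  unfolding ext_dom_eq
  by (rule lebesgue_closedin[of UNIV]) (auto intro!: closed_Collect_le continuous_intros)

lemma shift_in_ext: "x \<in> \<Omega> \<Longrightarrow> norm y < r \<Longrightarrow> x + y \<in> ext_dom \<Omega> r"
  unfolding ext_dom_def outer_layer_def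
  using infdist_le[of x \<Omega> "x + y"] by (auto simp: dist_norm)

lemma meas_shift:
  fixes E \<Omega> :: "('a::euclidean_space) set"
  assumes E: "E \<in> sets lebesgue" and O: "\<Omega> \<in> sets lebesgue" and sub: "\<forall>x\<in>\<Omega>. x + y \<in> E"
    and \<phi>: "\<phi> \<in> borel_measurable (lebesgue_on E)"
  shows "(\<lambda>x. \<phi> (x + y)) \<in> borel_measurable (lebesgue_on \<Omega>)"
proof -
  have "(\<lambda>x. x + y) \<in> measurable (lebesgue_on \<Omega>) (lebesgue_on E)"
  proof (rule measurableI)
    fix x assume "x \<in> space (lebesgue_on \<Omega>)" then show "x + y \<in> space (lebesgue_on E)"
      using sub by simp
  next
    fix A assume "A \<in> sets (lebesgue_on E)"
    then have A: "A \<in> sets lebesgue" using E by (simp add: sets_restrict_space_iff)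
    have eq: "(\<lambda>x. x + y) -` A \<inter> space (lebesgue_on \<Omega>) = \<Omega> \<inter> ((\<lambda>x. -y + x) ` A)"
      by (auto simp: image_iff) (metis add.commute diff_add_cancel uminus_add_conv_diff)
    have "(\<lambda>x. -y + x) ` A \<in> sets lebesgue" by (rule lebesgue_sets_translation[OF A])
    then show "(\<lambda>x. x + y) -` A \<inter> space (lebesgue_on \<Omega>) \<in> sets (lebesgue_on \<Omega>)"
      unfolding eq using O by (auto simp: sets_restrict_space_iff)
  qed
  from measurable_compose[OF this \<phi>] show ?thesis by (simp add: o_def)
qed


theorem lemma4p3:
  fixes \<Omega> :: "(real^'n) set" and f \<phi> :: "real^'n \<Rightarrow> real" and p r h :: real
  assumes "open \<Omega>" and "bounded \<Omega>"
    and "continuous_on (closure \<Omega>) f"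
    and "1 < p" and "0 < r" and "0 < h"
    and "\<phi> \<in> borel_measurable (lebesgue_on (ext_dom \<Omega> r))"
    and "bounded (\<phi> ` ext_dom \<Omega> r)"
  shows "(\<exists>\<psi>. \<psi> \<in> borel_measurable (lebesgue_on \<Omega>) \<and> bounded (\<psi> ` \<Omega>) \<and>
             (\<forall>x\<in>\<Omega>. - Lop p r h \<psi> \<phi> x = f x) \<and>
             (\<forall>\<psi>'. \<psi>' \<in> borel_measurable (lebesgue_on \<Omega>) \<and> bounded (\<psi>' ` \<Omega>) \<and>
                    (\<forall>x\<in>\<Omega>. - Lop p r h \<psi>' \<phi> x = f x) \<longrightarrow> (\<forall>x\<in>\<Omega>. \<psi>' x = \<psi> x)))
       \<and> (\<forall>\<psi>1 \<psi>2. (\<forall>x\<in>\<Omega>. - Lop p r h \<psi>1 \<phi> x \<le> f x) \<and> (\<forall>x\<in>\<Omega>. - Lop p r h \<psi>2 \<phi> x \<ge> f x)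
              \<longrightarrow> (\<forall>x\<in>\<Omega>. \<psi>1 x \<le> \<psi>2 x))"
proof -
  note p = \<open>1 < p\<close>
  define C where "C = h ^ CARD('n) / (Dconst TYPE('n) p * omega TYPE('n) * r powr (p + real CARD('n)))"
  define S where "S = grid h \<inter> ball (0::real^'n) r"
  define g where "g = (\<lambda>x t. - (C * (\<Sum>y\<in>S. Jp p (\<phi> (x + y) - t))))"
  have Cpos: "C > 0" unfolding C_def
    using Dconst_pos[OF p, where 'n='n] omega_pos[where 'n='n] \<open>0 < h\<close> \<open>0 < r\<close>
    by (intro divide_pos_pos mult_pos_pos) auto
  have fS: "finite S" unfolding S_def by (rule finite_grid_ball[OF \<open>0 < h\<close>])
  have S0: "0 \<in> S" unfolding S_def by (rule zero_grid_ball[OF \<open>0 < r\<close>])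
  have Lg: "- Lop p r h \<psi> \<phi> x = g x (\<psi> x)" for \<psi> x
    unfolding Lop_def g_def C_def S_def by simp
  have gstrict: "g x s < g x t" if "s < t" for x s t
  proof -
    have "(\<Sum>y\<in>S. Jp p (\<phi> (x + y) - t)) < (\<Sum>y\<in>S. Jp p (\<phi> (x + y) - s))"
    proof (rule sum_strict_mono_ex1[OF fS])
      show "\<forall>y\<in>S. Jp p (\<phi> (x + y) - t) \<le> Jp p (\<phi> (x + y) - s)"
        using that by (auto intro!: Jp_mono[OF p])
      show "\<exists>y\<in>S. Jp p (\<phi> (x + y) - t) < Jp p (\<phi> (x + y) - s)"
        using that S0 by (auto intro!: bexI[of _ 0] Jp_strict[OF p])
    qed
    then show ?thesis unfolding g_def using Cpos by simp
  qed
  have gmono_iff: "g x s \<le> g x t \<longleftrightarrow> s \<le> t" for x s t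
    using gstrict[of s t x] gstrict[of t s x] by (cases s t rule: linorder_cases) auto
  have gcont: "continuous_on UNIV (g x)" for x
  proof -
    have "continuous_on UNIV (\<lambda>t. Jp p (\<phi> (x + y) - t))" for y
      by (rule continuous_on_compose2[OF Jp_cont[OF p]]) (auto intro!: continuous_intros)
    then show ?thesis unfolding g_def by (intro continuous_intros) auto
  qed
  obtain M where M: "\<And>z. z \<in> ext_dom \<Omega> r \<Longrightarrow> \<bar>\<phi> z\<bar> \<le> M" and M0: "0 \<le> M"
  proof -
    obtain M where "\<forall>z\<in>\<phi> ` ext_dom \<Omega> r. norm z \<le> M" using assms(8) bounded_iff by blast
    then show ?thesis using that[of "max M 0"] by fastforce
  qed
  obtain F where F: "\<And>x. x \<in> \<Omega> \<Longrightarrow> \<bar>f x\<bar> \<le> F" and F0: "0 \<le> F"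
  proof -
    have "compact (f ` closure \<Omega>)"
      using assms(2,3) by (intro compact_continuous_image) (auto simp: compact_closure)
    then obtain F where "\<forall>z\<in>f ` closure \<Omega>. norm z \<le> F" using compact_imp_bounded bounded_iff by blast
    then show ?thesis using that[of "max F 0"] closure_subset by fastforce
  qed
  define T where "T = (F / C) powr (1 / (p - 1))"
  have T0: "0 \<le> T" unfolding T_def by simp
  have TF: "C * T powr (p - 1) \<ge> F"
  proof -
    have "T powr (p - 1) = (F / C) powr (1 / (p - 1) * (p - 1))" unfolding T_def by (simp add: powr_powr)
    also have "\<dots> = F / C" using p F0 Cpos by simp
    finally show ?thesis using Cpos by (simp add: field_simps)
  qed
  have cardS: "real (card S) \<ge> 1" using fS S0 by (metis card_0_eq empty_iff less_one not_le of_nat_1 of_nat_le_iff)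
  have inext: "x + y \<in> ext_dom \<Omega> r" if "x \<in> \<Omega>" "y \<in> S" for x y
    using that shift_in_ext[of x \<Omega> y r] unfolding S_def by auto
  have upper: "g x (M + T) \<ge> f x" if x: "x \<in> \<Omega>" for x
  proof -
    have "(\<Sum>y\<in>S. Jp p (\<phi> (x + y) - (M + T))) \<le> (\<Sum>y\<in>S. - (T powr (p - 1)))"
    proof (rule sum_mono)
      fix y assume "y \<in> S"
      then have "\<phi> (x + y) - (M + T) \<le> - T" using M[OF inext[OF x \<open>y \<in> S\<close>]] by (auto simp: abs_le_iff)
      then have "Jp p (\<phi> (x + y) - (M + T)) \<le> Jp p (- T)" by (rule Jp_mono[OF p])
      then show "Jp p (\<phi> (x + y) - (M + T)) \<le> - (T powr (p - 1))" using Jp_neg[OF p, of "-T"] T0 by simp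
    qed
    also have "\<dots> = - (real (card S) * T powr (p - 1))" by simp
    also have "\<dots> \<le> - (T powr (p - 1))" using cardS by (simp add: mult_le_cancel_right1)
    finally have "C * (\<Sum>y\<in>S. Jp p (\<phi> (x + y) - (M + T))) \<le> C * (- (T powr (p - 1)))"
      using Cpos by (intro mult_left_mono) auto
    then have "C * T powr (p - 1) \<le> g x (M + T)" unfolding g_def by simp
    then show ?thesis using TF F[OF x] by linarith
  qed
  have lower: "g x (- (M + T)) \<le> f x" if x: "x \<in> \<Omega>" for x
  proof -
    have "(\<Sum>y\<in>S. T powr (p - 1)) \<le> (\<Sum>y\<in>S. Jp p (\<phi> (x + y) - (- (M + T))))"
    proof (rule sum_mono)
      fix y assume "y \<in> S"
      then have "T \<le> \<phi> (x + y) - (- (M + T))" using M[OF inext[OF x \<open>y \<in> S\<close>]] by (auto simp: abs_le_iff)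
      then have "Jp p T \<le> Jp p (\<phi> (x + y) - (- (M + T)))" by (rule Jp_mono[OF p])
      then show "T powr (p - 1) \<le> Jp p (\<phi> (x + y) - (- (M + T)))" using Jp_pos[OF p T0] by simp
    qed
    moreover have "(\<Sum>y\<in>S. T powr (p - 1)) = real (card S) * T powr (p - 1)" by simp
    moreover have "T powr (p - 1) \<le> real (card S) * T powr (p - 1)" using cardS by (simp add: mult_le_cancel_right1)
    ultimately have "T powr (p - 1) \<le> (\<Sum>y\<in>S. Jp p (\<phi> (x + y) - (- (M + T))))" by linarith
    then have "C * T powr (p - 1) \<le> C * (\<Sum>y\<in>S. Jp p (\<phi> (x + y) - (- (M + T))))"
      using Cpos by (intro mult_left_mono) auto
    then have "g x (- (M + T)) \<le> - (C * T powr (p - 1))" unfolding g_def by simp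
    then show ?thesis using TF F[OF x] by linarith
  qed
  define \<psi> where "\<psi> = (\<lambda>x. THE t. g x t = f x)"
  have \<psi>: "g x (\<psi> x) = f x \<and> - (M + T) \<le> \<psi> x \<and> \<psi> x \<le> M + T" if x: "x \<in> \<Omega>" for x
  proof -
    obtain t where t: "- (M + T) \<le> t" "t \<le> M + T" "g x t = f x"
      using IVT'[of "g x" "- (M + T)" "f x" "M + T"] lower[OF x] upper[OF x] M0 T0
        continuous_on_subset[OF gcont] by auto
    have "\<psi> x = t" unfolding \<psi>_def
    proof (rule the_equality)
      show "g x t = f x" by fact
      fix s assume "g x s = f x" then show "s = t" using t(3) gmono_iff[of x s t] gmono_iff[of x t s] by auto
    qed
    then show ?thesis using t by simp
  qed
  have Om: "\<Omega> \<in> sets lebesgue" using assms(1) by (metis borel_open sets_completionI_sets sets_lborel)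
  have fm: "f \<in> borel_measurable (lebesgue_on \<Omega>)"
    by (rule continuous_imp_measurable_on_sets_lebesgue[OF continuous_on_subset[OF assms(3) closure_subset] Om])
  have gm: "(\<lambda>w. g w a) \<in> borel_measurable (lebesgue_on \<Omega>)" for a
  proof -
    have "(\<lambda>w. Jp p (\<phi> (w + y) - a)) \<in> borel_measurable (lebesgue_on \<Omega>)" if y: "y \<in> S" for y
    proof -
      have "(\<lambda>w. \<phi> (w + y)) \<in> borel_measurable (lebesgue_on \<Omega>)"
        by (rule meas_shift[OF ext_dom_sets[OF \<open>0 < r\<close>] Om _ assms(7)]) (use inext y in auto)
      then have "(\<lambda>w. \<phi> (w + y) - a) \<in> borel_measurable (lebesgue_on \<Omega>)" by measurable
      moreover have "Jp p \<in> borel_measurable borel"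
        by (rule borel_measurable_mono) (auto simp: mono_def intro: Jp_mono[OF p])
      ultimately show ?thesis using measurable_compose by (auto simp: o_def)
    qed
    then show ?thesis unfolding g_def by (intro borel_measurable_uminus borel_measurable_times borel_measurable_const borel_measurable_sum) auto
  qed
  have \<psi>m: "\<psi> \<in> borel_measurable (lebesgue_on \<Omega>)"
    unfolding borel_measurable_iff_greater
  proof
    fix a
    have "{w \<in> space (lebesgue_on \<Omega>). a < \<psi> w} = {w \<in> space (lebesgue_on \<Omega>). 0 < f w - g w a}"
    proof -
      have "a < \<psi> w \<longleftrightarrow> 0 < f w - g w a" if w: "w \<in> \<Omega>" for w
      proof -
        have "a < \<psi> w \<longleftrightarrow> \<not> g w (\<psi> w) \<le> g w a" using gmono_iff[of w "\<psi> w" a] by auto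
        then show ?thesis using \<psi>[OF w] by auto
      qed
      then show ?thesis by auto
    qed
    moreover have "(\<lambda>w. f w - g w a) \<in> borel_measurable (lebesgue_on \<Omega>)"
      using fm gm[of a] by (rule borel_measurable_diff)
    then have "{w \<in> space (lebesgue_on \<Omega>). 0 < f w - g w a} \<in> sets (lebesgue_on \<Omega>)"
      unfolding borel_measurable_iff_greater by blast
    ultimately show "{w \<in> space (lebesgue_on \<Omega>). a < \<psi> w} \<in> sets (lebesgue_on \<Omega>)"
      by simp
  qed
  have \<psi>b: "bounded (\<psi> ` \<Omega>)"
    unfolding bounded_iff
  proof (intro exI[of _ "M + T"] ballI)
    fix z assume "z \<in> \<psi> ` \<Omega>"
    then obtain x where x: "x \<in> \<Omega>" "z = \<psi> x" by auto
    then show "norm z \<le> M + T" using \<psi>[OF x(1)] by (simp add: abs_le_iff)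
  qed
  show ?thesis
  proof (intro conjI allI impI exI[of _ \<psi>])
    show "\<psi> \<in> borel_measurable (lebesgue_on \<Omega>)" by fact
    show "bounded (\<psi> ` \<Omega>)" by fact
    show "\<forall>x\<in>\<Omega>. - Lop p r h \<psi> \<phi> x = f x" using \<psi> Lg by auto
  next
    fix \<psi>' assume a: "\<psi>' \<in> borel_measurable (lebesgue_on \<Omega>) \<and> bounded (\<psi>' ` \<Omega>) \<and>
                    (\<forall>x\<in>\<Omega>. - Lop p r h \<psi>' \<phi> x = f x)"
    show "\<forall>x\<in>\<Omega>. \<psi>' x = \<psi> x"
    proof
      fix x assume x: "x \<in> \<Omega>"
      have "g x (\<psi>' x) = g x (\<psi> x)" using a x \<psi>[OF x] Lg by auto
      then show "\<psi>' x = \<psi> x" using gmono_iff[of x "\<psi>' x" "\<psi> x"] gmono_iff[of x "\<psi> x" "\<psi>' x"] by auto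
    qed
  next
    fix \<psi>1 \<psi>2 :: "real^'n \<Rightarrow> real"
    assume a: "(\<forall>x\<in>\<Omega>. - Lop p r h \<psi>1 \<phi> x \<le> f x) \<and> (\<forall>x\<in>\<Omega>. f x \<le> - Lop p r h \<psi>2 \<phi> x)"
    show "\<forall>x\<in>\<Omega>. \<psi>1 x \<le> \<psi>2 x"
    proof
      fix x assume x: "x \<in> \<Omega>"
      have "g x (\<psi>1 x) \<le> g x (\<psi>2 x)" using a x Lg by (metis order_trans)
      then show "\<psi>1 x \<le> \<psi>2 x" using gmono_iff by auto
    qed
  qed
qed

end
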